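(* Let $x\in\mathbb R^N$ with block structure $\mathcal B=(\mathcal B_1,\dots,\mathcal B_B)$, weights $\omega_b\ge1$, $0<p\le 2$, and a block norm $\|\cdot\|_q$. For every $s\ge\|\omega\|_\infty^2$, $$\widetilde\sigma_{3s}(x)_{q,p}^{(\omega)}\le\sigma_s(x)_{q,p}^{(\omega)}.$$
   Context: Block structure: $\mathcal B=(\mathcal B_1,\dots,\mathcal B_B)$ is a partition of $\{1,\dots,N\}$; for $x\in\mathbb R^N$, $x[b]=x[\mathcal B_b]$; for $S\subseteq\{1,\dots,B\}$, $x[S]$ equals $x$ on blocks in $S$ and $0$ elsewhere. Weights $\omega_b\ge1$, $\|\omega\|_\infty=\max_b\omega_b$, $\omega(S)=\sum_{b\in S}\omega_b^2$. $\|x\|_{q,p}^{(\omega)}=\big(\sum_b\omega_b^{2-p}\|x[b]\|_q^p\big)^{1/p}$. $\|x\|_0^{(\omega)}=\omega(\{b:x[b]\ne0\})$. $\sigma_s(x)_{q,p}^{(\omega)}=\inf\{\|x-z\|_{q,p}^{(\omega)}:\|z\|_0^{(\omega)}\le s\}$. Quasi-best approximation: let $\pi$ be a permutation of $\{1,\dots,B\}$ with $\|x[\pi(i)]\|_q/\omega_{\pi(i)}$ nonincreasing in $i$; for $t\ge\|\omega\|_\infty^2$ let $k_t=\max\{k:\sum_{i=1}^k\omega_{\pi(i)}^2\le t\}$, $S_t=\{\pi(1),\dots,\pi(k_t)\}$ and $\widetilde\sigma_t(x)_{q,p}^{(\omega)}=\|x-x[S_t]\|_{q,p}^{(\omega)}$.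 *)

theory Defs
  imports "HOL-Analysis.Analysis"
begin

text \<open>Coordinates are indexed by 1..N, blocks by 1..nB. Vectors are functions nat => real; only
  coordinates in 1..N matter.\<close>

definition is_block_partition :: "nat \<Rightarrow> nat \<Rightarrow> (nat \<Rightarrow> nat set) \<Rightarrow> bool" where
  "is_block_partition N nB Bl \<longleftrightarrow>
     (\<forall>b\<in>{1..nB}. Bl b \<noteq> {} \<and> Bl b \<subseteq> {1..N}) \<and>
     (\<forall>b\<in>{1..nB}. \<forall>b'\<in>{1..nB}. b \<noteq> b' \<longrightarrow> Bl b \<inter> Bl b' = {}) \<and>
     (\<Union>b\<in>{1..nB}. Bl b) = {1..N}"

definition blk_qnorm :: "ereal \<Rightarrow> (nat \<Rightarrow> real) \<Rightarrow> nat set \<Rightarrow> real" where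
  "blk_qnorm q x I =
     (if q = \<infinity> then Max ((\<lambda>i. \<bar>x i\<bar>) ` I)
      else (\<Sum>i\<in>I. \<bar>x i\<bar> powr real_of_ereal q) powr (1 / real_of_ereal q))"

definition wnorm :: "(nat \<Rightarrow> nat set) \<Rightarrow> nat \<Rightarrow> (nat \<Rightarrow> real) \<Rightarrow> ereal \<Rightarrow> real
                      \<Rightarrow> (nat \<Rightarrow> real) \<Rightarrow> real" where
  "wnorm Bl nB \<omega> q p x =
     (\<Sum>b\<in>{1..nB}. \<omega> b powr (2 - p) * blk_qnorm q x (Bl b) powr p) powr (1 / p)"

definition wsize :: "(nat \<Rightarrow> real) \<Rightarrow> nat set \<Rightarrow> real" where
  "wsize \<omega> S = (\<Sum>b\<in>S. (\<omega> b)\<^sup>2)"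

definition bsupp :: "(nat \<Rightarrow> nat set) \<Rightarrow> nat \<Rightarrow> (nat \<Rightarrow> real) \<Rightarrow> nat set" where
  "bsupp Bl nB z = {b\<in>{1..nB}. \<exists>i\<in>Bl b. z i \<noteq> 0}"

definition w0 :: "(nat \<Rightarrow> nat set) \<Rightarrow> nat \<Rightarrow> (nat \<Rightarrow> real) \<Rightarrow> (nat \<Rightarrow> real) \<Rightarrow> real" where
  "w0 Bl nB \<omega> z = wsize \<omega> (bsupp Bl nB z)"

definition sigma_best :: "(nat \<Rightarrow> nat set) \<Rightarrow> nat \<Rightarrow> (nat \<Rightarrow> real) \<Rightarrow> ereal \<Rightarrow> real
                           \<Rightarrow> real \<Rightarrow> (nat \<Rightarrow> real) \<Rightarrow> real" where
  "sigma_best Bl nB \<omega> q p s x =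
     Inf {wnorm Bl nB \<omega> q p (\<lambda>i. x i - z i) | z. w0 Bl nB \<omega> z \<le> s}"

definition restr :: "(nat \<Rightarrow> nat set) \<Rightarrow> nat set \<Rightarrow> (nat \<Rightarrow> real) \<Rightarrow> nat \<Rightarrow> real" where
  "restr Bl S x = (\<lambda>i. if \<exists>b\<in>S. i \<in> Bl b then x i else 0)"

definition sorting_perm :: "(nat \<Rightarrow> nat set) \<Rightarrow> nat \<Rightarrow> (nat \<Rightarrow> real) \<Rightarrow> ereal
                             \<Rightarrow> (nat \<Rightarrow> real) \<Rightarrow> (nat \<Rightarrow> nat) \<Rightarrow> bool" where
  "sorting_perm Bl nB \<omega> q x \<pi> \<longleftrightarrow>
     bij_betw \<pi> {1..nB} {1..nB} \<and>
     (\<forall>i j. 1 \<le> i \<longrightarrow> i \<le> j \<longrightarrow> j \<le> nB \<longrightarrow>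
        blk_qnorm q x (Bl (\<pi> j)) / \<omega> (\<pi> j) \<le> blk_qnorm q x (Bl (\<pi> i)) / \<omega> (\<pi> i))"

definition k_t :: "nat \<Rightarrow> (nat \<Rightarrow> real) \<Rightarrow> (nat \<Rightarrow> nat) \<Rightarrow> real \<Rightarrow> nat" where
  "k_t nB \<omega> \<pi> t = Max {k \<in> {0..nB}. (\<Sum>i=1..k. (\<omega> (\<pi> i))\<^sup>2) \<le> t}"

definition S_t :: "nat \<Rightarrow> (nat \<Rightarrow> real) \<Rightarrow> (nat \<Rightarrow> nat) \<Rightarrow> real \<Rightarrow> nat set" where
  "S_t nB \<omega> \<pi> t = \<pi> ` {1..k_t nB \<omega> \<pi> t}"

definition sigma_qb :: "(nat \<Rightarrow> nat set) \<Rightarrow> nat \<Rightarrow> (nat \<Rightarrow> real) \<Rightarrow> ereal \<Rightarrow> real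
                         \<Rightarrow> (nat \<Rightarrow> nat) \<Rightarrow> real \<Rightarrow> (nat \<Rightarrow> real) \<Rightarrow> real" where
  "sigma_qb Bl nB \<omega> q p \<pi> t x =
     wnorm Bl nB \<omega> q p (\<lambda>i. x i - restr Bl (S_t nB \<omega> \<pi> t) x i)"

definition winf :: "nat \<Rightarrow> (nat \<Rightarrow> real) \<Rightarrow> real" where
  "winf nB \<omega> = Max (\<omega> ` {1..nB})"

end

theory Submission
  imports Defs
begin

lemma blk_cong:
  assumes "\<And>i. i \<in> I \<Longrightarrow> f i = g i"
  shows "blk_qnorm q f I = blk_qnorm q g I"
proof -
  have "(\<lambda>i. \<bar>f i\<bar>) ` I = (\<lambda>i. \<bar>g i\<bar>) ` I" using assms by auto
  moreover have "(\<Sum>i\<in>I. \<bar>f i\<bar> powr real_of_ereal q) = (\<Sum>i\<in>I. \<bar>g i\<bar> powr real_of_ereal q)"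
    using assms by (intro sum.cong) auto
  ultimately show ?thesis unfolding blk_qnorm_def by simp
qed

lemma blk_zero:
  assumes "I \<noteq> {}" "1 \<le> q"
  shows "blk_qnorm q (\<lambda>i. 0) I = 0"
proof (cases "q = \<infinity>")
  case True
  have "(\<lambda>i. \<bar>0::real\<bar>) ` I = {0}" using assms by auto
  then show ?thesis using True unfolding blk_qnorm_def by simp
next
  case False
  have "real_of_ereal q \<noteq> 0"
    using assms False by (cases q) auto
  then show ?thesis using False unfolding blk_qnorm_def by simp
qed

lemma blk_nonneg:
  assumes "finite I" "I \<noteq> {}"
  shows "blk_qnorm q f I \<ge> 0"
proof (cases "q = \<infinity>")
  case True
  obtain i where i: "i \<in> I" using assms by auto
  have "\<bar>f i\<bar> \<le> Max ((\<lambda>i. \<bar>f i\<bar>) ` I)" using assms i by (intro Max_ge) auto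
  then show ?thesis using True unfolding blk_qnorm_def by simp
next
  case False
  then show ?thesis unfolding blk_qnorm_def by simp
qed

lemma term_eq:
  fixes w n p :: real
  assumes "w > 0" "n \<ge> 0"
  shows "w powr (2 - p) * n powr p = w\<^sup>2 * (n / w) powr p"
proof -
  have "w powr (2 - p) = w powr 2 / w powr p" using assms by (simp add: powr_diff)
  moreover have "w powr 2 = w\<^sup>2" using assms by simp
  moreover have "(n / w) powr p = n powr p / w powr p" using assms by (simp add: powr_divide)
  ultimately show ?thesis by simp
qed

theorem mainTheorem2:
  fixes N nB :: nat and Bl :: "nat \<Rightarrow> nat set" and \<omega> :: "nat \<Rightarrow> real"
    and q :: ereal and p s :: real and x :: "nat \<Rightarrow> real" and \<pi> :: "nat \<Rightarrow> nat"
  assumes "is_block_partition N nB Bl"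
    and "\<forall>b\<in>{1..nB}. \<omega> b \<ge> 1"
    and "1 \<le> q"
    and "0 < p" and "p \<le> 2"
    and "s \<ge> (winf nB \<omega>)\<^sup>2"
    and "sorting_perm Bl nB \<omega> q x \<pi>"
  shows "sigma_qb Bl nB \<omega> q p \<pi> (3 * s) x \<le> sigma_best Bl nB \<omega> q p s x"
proof -
  note part = assms(1)[unfolded is_block_partition_def]
  have bij: "bij_betw \<pi> {1..nB} {1..nB}" and mono: "\<And>i j. 1 \<le> i \<Longrightarrow> i \<le> j \<Longrightarrow> j \<le> nB \<Longrightarrow>
        blk_qnorm q x (Bl (\<pi> j)) / \<omega> (\<pi> j) \<le> blk_qnorm q x (Bl (\<pi> i)) / \<omega> (\<pi> i)"
    using assms(7) unfolding sorting_perm_def by auto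
  define U where "U = {1..nB}"
  have fin: "\<And>b. b \<in> U \<Longrightarrow> finite (Bl b)" using part unfolding U_def
    by (meson finite_atLeastAtMost finite_subset)
  have ne: "\<And>b. b \<in> U \<Longrightarrow> Bl b \<noteq> {}" using part unfolding U_def by auto
  have disj: "\<And>b b'. b \<in> U \<Longrightarrow> b' \<in> U \<Longrightarrow> b \<noteq> b' \<Longrightarrow> Bl b \<inter> Bl b' = {}"
    using part unfolding U_def by auto
  have wpos: "\<And>b. b \<in> U \<Longrightarrow> \<omega> b > 0" using assms(2) unfolding U_def by force
  define n where "n b = blk_qnorm q x (Bl b)" for b
  define r where "r b = (n b / \<omega> b) powr p" for b
  define a where "a b = \<omega> b powr (2 - p) * n b powr p" for b
  have nnn: "\<And>b. b \<in> U \<Longrightarrow> n b \<ge> 0" unfolding n_def using fin ne blk_nonneg by auto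
  have a_eq: "\<And>b. b \<in> U \<Longrightarrow> a b = (\<omega> b)\<^sup>2 * r b"
    unfolding a_def r_def using term_eq wpos nnn by auto
  have r_nn: "\<And>b. r b \<ge> 0" unfolding r_def by simp
  have a_nn: "\<And>b. a b \<ge> 0" unfolding a_def by simp
  have s0: "s \<ge> 0" using assms(6) by (smt (verit) zero_le_power2)
  have rmono: "\<And>i j. 1 \<le> i \<Longrightarrow> i \<le> j \<Longrightarrow> j \<le> nB \<Longrightarrow> r (\<pi> j) \<le> r (\<pi> i)"
  proof -
    fix i j assume h: "1 \<le> i" "i \<le> j" "j \<le> nB"
    have "\<pi> j \<in> U" using bij h unfolding U_def bij_betw_def by auto
    then have "n (\<pi> j) / \<omega> (\<pi> j) \<ge> 0" using nnn wpos by (simp add: less_imp_le)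
    then show "r (\<pi> j) \<le> r (\<pi> i)" unfolding r_def n_def
      using mono[OF h] assms(4) by (intro powr_mono2) auto
  qed
  define k where "k = k_t nB \<omega> \<pi> (3 * s)"
  define S where "S = S_t nB \<omega> \<pi> (3 * s)"
  define K where "K = {k \<in> {0..nB}. (\<Sum>i=1..k. (\<omega> (\<pi> i))\<^sup>2) \<le> 3 * s}"
  have K0: "0 \<in> K" unfolding K_def using s0 by simp
  have Kfin: "finite K" unfolding K_def by simp
  have kK: "k \<in> K" unfolding k_def k_t_def K_def[symmetric] using K0 Kfin by (intro Max_in) auto
  have kmax: "\<And>k'. k' \<in> K \<Longrightarrow> k' \<le> k" unfolding k_def k_t_def K_def[symmetric]
    using Kfin by simp
  have knB: "k \<le> nB" using kK unfolding K_def by simp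
  have S_def': "S = \<pi> ` {1..k}" unfolding S_def S_t_def k_def by simp
  have SU: "S \<subseteq> U" using bij knB unfolding S_def' U_def bij_betw_def by auto
  have key: "\<And>T. T \<subseteq> U \<Longrightarrow> wsize \<omega> T \<le> s \<Longrightarrow> (\<Sum>b\<in>U-S. a b) \<le> (\<Sum>b\<in>U-T. a b)"
  proof -
    fix T assume TU: "T \<subseteq> U" and Ts: "wsize \<omega> T \<le> s"
    have finU: "finite U" unfolding U_def by simp
    show "(\<Sum>b\<in>U-S. a b) \<le> (\<Sum>b\<in>U-T. a b)"
    proof (cases "k = nB")
      case True
      have "S = U" unfolding S_def' U_def True using bij by (simp add: bij_betw_def)
      then show ?thesis using a_nn by (simp add: sum_nonneg)
    next
      case False
      then have kl: "Suc k \<le> nB" using knB by simp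
      define \<tau> where "\<tau> = r (\<pi> (Suc k))"
      have tau0: "\<tau> \<ge> 0" unfolding \<tau>_def using r_nn by simp
      have rS: "\<And>b. b \<in> S \<Longrightarrow> r b \<ge> \<tau>"
      proof -
        fix b assume "b \<in> S"
        then obtain i where i: "i \<in> {1..k}" "b = \<pi> i" unfolding S_def' by auto
        then show "r b \<ge> \<tau>" unfolding \<tau>_def using rmono[of i "Suc k"] kl by auto
      qed
      have rnS: "\<And>b. b \<in> U - S \<Longrightarrow> r b \<le> \<tau>"
      proof -
        fix b assume b: "b \<in> U - S"
        have "U = \<pi> ` {1..nB}" using bij unfolding U_def bij_betw_def by simp
        then obtain i where i: "i \<in> {1..nB}" "b = \<pi> i" using b by auto
        have "i \<notin> {1..k}" using b i unfolding S_def' by auto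
        then have "Suc k \<le> i" using i by auto
        then show "r b \<le> \<tau>" unfolding \<tau>_def using rmono[of "Suc k" i] i by auto
      qed
      have wS: "wsize \<omega> S = (\<Sum>i=1..k. (\<omega> (\<pi> i))\<^sup>2)"
      proof -
        have "inj_on \<pi> {1..k}" using bij knB unfolding bij_betw_def
          by (meson atLeastatMost_subset_iff inj_on_subset order_refl)
        then show ?thesis unfolding wsize_def S_def' by (simp add: sum.reindex)
      qed
      have "Suc k \<notin> K" using kmax by fastforce
      then have gt: "(\<Sum>i=1..Suc k. (\<omega> (\<pi> i))\<^sup>2) > 3 * s" using kl unfolding K_def by auto
      have "\<pi> (Suc k) \<in> U" using bij kl unfolding U_def bij_betw_def by auto
      then have "\<omega> (\<pi> (Suc k)) \<le> winf nB \<omega>" "\<omega> (\<pi> (Suc k)) > 0"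
        unfolding winf_def U_def using wpos[unfolded U_def] by (auto intro: Max_ge)
      then have "(\<omega> (\<pi> (Suc k)))\<^sup>2 \<le> (winf nB \<omega>)\<^sup>2" by (intro power_mono) auto
      then have wS2: "wsize \<omega> S > 2 * s" using gt assms(6) unfolding wS by simp
      have wnn: "\<And>A. wsize \<omega> A \<ge> 0" unfolding wsize_def by (simp add: sum_nonneg)
      have sp1: "(\<Sum>b\<in>U-S. a b) = (\<Sum>b\<in>(U-S)-T. a b) + (\<Sum>b\<in>(U-S)\<inter>T. a b)"
        using sum.Int_Diff[of "U-S" a T] finU by simp
      have sp2: "(\<Sum>b\<in>U-T. a b) = (\<Sum>b\<in>(U-S)-T. a b) + (\<Sum>b\<in>S-T. a b)"
      proof -
        have "(\<Sum>b\<in>U-T. a b) = (\<Sum>b\<in>(U-T)-(S-T). a b) + (\<Sum>b\<in>S-T. a b)"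
          using finU SU by (intro sum.subset_diff) auto
        moreover have "(U-T)-(S-T) = (U-S)-T" by auto
        ultimately show ?thesis by simp
      qed
      have "(\<Sum>b\<in>(U-S)\<inter>T. a b) \<le> (\<Sum>b\<in>(U-S)\<inter>T. (\<omega> b)\<^sup>2 * \<tau>)"
        using a_eq rnS by (intro sum_mono) (auto intro: mult_left_mono)
      also have "\<dots> = \<tau> * wsize \<omega> ((U-S)\<inter>T)" unfolding wsize_def
        by (simp add: sum_distrib_left mult.commute)
      also have "\<dots> \<le> \<tau> * wsize \<omega> T"
        using tau0 TU finU unfolding wsize_def
        by (intro mult_left_mono sum_mono2) (auto intro: finite_subset)
      also have "\<dots> \<le> \<tau> * s" using tau0 Ts by (intro mult_left_mono) auto
      finally have L: "(\<Sum>b\<in>(U-S)\<inter>T. a b) \<le> \<tau> * s" .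
      have "wsize \<omega> S = wsize \<omega> (S-T) + wsize \<omega> (S \<inter> T)"
      proof -
        have "finite S" using finU SU finite_subset by auto
        then show ?thesis using sum.Int_Diff[of S "\<lambda>b. (\<omega> b)\<^sup>2" T] unfolding wsize_def by simp
      qed
      moreover have "wsize \<omega> (S \<inter> T) \<le> wsize \<omega> T" unfolding wsize_def
        using finU TU by (intro sum_mono2) (auto intro: finite_subset)
      ultimately have "wsize \<omega> (S-T) \<ge> s" using wS2 Ts by linarith
      then have "\<tau> * s \<le> \<tau> * wsize \<omega> (S-T)" using tau0 by (intro mult_left_mono) auto
      also have "\<dots> = (\<Sum>b\<in>S-T. (\<omega> b)\<^sup>2 * \<tau>)" unfolding wsize_def
        by (simp add: sum_distrib_left mult.commute)
      also have "\<dots> \<le> (\<Sum>b\<in>S-T. a b)"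
      proof (intro sum_mono)
        fix b assume b: "b \<in> S - T"
        then have "b \<in> U" using SU by auto
        then show "(\<omega> b)\<^sup>2 * \<tau> \<le> a b" using a_eq rS b by (simp add: mult_left_mono)
      qed
      finally have R: "\<tau> * s \<le> (\<Sum>b\<in>S-T. a b)" .
      show ?thesis using sp1 sp2 L R by linarith
    qed
  qed
  have qb: "sigma_qb Bl nB \<omega> q p \<pi> (3 * s) x = (\<Sum>b\<in>U-S. a b) powr (1/p)"
  proof -
    let ?f = "\<lambda>b. \<omega> b powr (2 - p) * blk_qnorm q (\<lambda>i. x i - restr Bl S x i) (Bl b) powr p"
    have z: "\<And>b. b \<in> S \<Longrightarrow> ?f b = 0"
    proof -
      fix b assume b: "b \<in> S"
      have "blk_qnorm q (\<lambda>i. x i - restr Bl S x i) (Bl b) = blk_qnorm q (\<lambda>i. 0) (Bl b)"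
        using b by (intro blk_cong) (auto simp: restr_def)
      also have "\<dots> = 0" using blk_zero ne b SU assms(3) by auto
      finally show "?f b = 0" using assms(4) by simp
    qed
    have o: "\<And>b. b \<in> U - S \<Longrightarrow> ?f b = a b"
    proof -
      fix b assume b: "b \<in> U - S"
      have "blk_qnorm q (\<lambda>i. x i - restr Bl S x i) (Bl b) = n b" unfolding n_def
      proof (intro blk_cong)
        fix i assume i: "i \<in> Bl b"
        have "\<not> (\<exists>b'\<in>S. i \<in> Bl b')"
        proof
          assume "\<exists>b'\<in>S. i \<in> Bl b'"
          then obtain b' where "b' \<in> S" "i \<in> Bl b'" by blast
          then show False using disj[of b b'] b i SU by auto
        qed
        then show "x i - restr Bl S x i = x i" by (simp add: restr_def)
      qed
      then show "?f b = a b" unfolding a_def by simp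
    qed
    have "(\<Sum>b\<in>U. ?f b) = (\<Sum>b\<in>U-S. ?f b) + (\<Sum>b\<in>S. ?f b)"
      using SU by (metis (no_types, lifting) U_def finite_atLeastAtMost sum.subset_diff)
    also have "\<dots> = (\<Sum>b\<in>U-S. a b)"
    proof -
      have e1: "(\<Sum>b\<in>S. ?f b) = 0" by (rule sum.neutral) (use z in blast)
      have e2: "(\<Sum>b\<in>U-S. ?f b) = (\<Sum>b\<in>U-S. a b)" by (rule sum.cong) (use o in auto)
      show ?thesis by (simp only: e1 e2)
    qed
    finally show ?thesis unfolding sigma_qb_def wnorm_def U_def S_def by simp
  qed
  have best: "\<And>z. w0 Bl nB \<omega> z \<le> s \<Longrightarrow>
     (\<Sum>b\<in>U-S. a b) powr (1/p) \<le> wnorm Bl nB \<omega> q p (\<lambda>i. x i - z i)"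
  proof -
    fix z assume hz: "w0 Bl nB \<omega> z \<le> s"
    define T where "T = bsupp Bl nB z"
    have TU: "T \<subseteq> U" unfolding T_def bsupp_def U_def by auto
    let ?f = "\<lambda>b. \<omega> b powr (2 - p) * blk_qnorm q (\<lambda>i. x i - z i) (Bl b) powr p"
    have o: "\<And>b. b \<in> U - T \<Longrightarrow> ?f b = a b"
    proof -
      fix b assume b: "b \<in> U - T"
      have "blk_qnorm q (\<lambda>i. x i - z i) (Bl b) = n b" unfolding n_def
        using b by (intro blk_cong) (auto simp: T_def bsupp_def U_def)
      then show "?f b = a b" unfolding a_def by simp
    qed
    have "(\<Sum>b\<in>U-S. a b) \<le> (\<Sum>b\<in>U-T. a b)"
      using key[OF TU] hz unfolding T_def w0_def by simp
    also have "\<dots> = (\<Sum>b\<in>U-T. ?f b)" using o by simp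
    also have "\<dots> \<le> (\<Sum>b\<in>U. ?f b)" by (intro sum_mono2) (auto simp: U_def)
    finally have "(\<Sum>b\<in>U-S. a b) \<le> (\<Sum>b\<in>U. ?f b)" .
    moreover have "(\<Sum>b\<in>U-S. a b) \<ge> 0" using a_nn by (simp add: sum_nonneg)
    ultimately show "(\<Sum>b\<in>U-S. a b) powr (1/p) \<le> wnorm Bl nB \<omega> q p (\<lambda>i. x i - z i)"
      unfolding wnorm_def U_def[symmetric] using assms(4) by (intro powr_mono2) auto
  qed
  show ?thesis unfolding sigma_best_def qb
  proof (rule cInf_greatest)
    have "w0 Bl nB \<omega> (\<lambda>i. 0) \<le> s" unfolding w0_def bsupp_def wsize_def using s0 by simp
    then show "{wnorm Bl nB \<omega> q p (\<lambda>i. x i - z i) |z. w0 Bl nB \<omega> z \<le> s} \<noteq> {}" by blast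
  next
    fix y assume "y \<in> {wnorm Bl nB \<omega> q p (\<lambda>i. x i - z i) |z. w0 Bl nB \<omega> z \<le> s}"
    then show "(\<Sum>b\<in>U - S. a b) powr (1 / p) \<le> y" using best by blast
  qed
qed

end
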